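(* Let $W=(Y,Z)$ be a random vector with $Y$ real-valued and $\mathbb{E}[Y^2]<\infty$, and let $g_0(Z):=\mathbb{E}[Y\mid Z]$. Let $m(W;g)$ be a moment functional such that $g\mapsto \mathbb{E}[m(W;g)]$ is a continuous linear functional on $\{g:\mathbb{E}[g(Z)^2]<\infty\}$, with Riesz representer $\alpha_0$, i.e. $\alpha_0(Z)$ is square-integrable and $\mathbb{E}[m(W;g)]=\mathbb{E}[\alpha_0(Z)g(Z)]$ for all $g$ with $\mathbb{E}[g(Z)^2]<\infty$. Let $\theta_0:=\mathbb{E}[m(W;g_0)]$, let $A:=\alpha_0(Z)$ and let $h_0(a):=\mathbb{E}[Y\mid A=a]$. Then $$\theta_0=\mathbb{E}[m(W;h_0\circ\alpha_0)]=\mathbb{E}[h_0(\alpha_0(Z))\,\alpha_0(Z)].$$ That is, to estimate $\theta_0$ it suffices to estimate the regression function $h_0\circ\alpha_0$, which conditions only on the value of the Riesz representer.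
   Context: Here $h_0\circ\alpha_0$ denotes the function $z\mapsto h_0(\alpha_0(z))$, which is square-integrable as a function of $Z$ since it is a conditional expectation of the square-integrable $Y$. *)

theory Defs
  imports "HOL-Probability.Probability"
begin

end

theory Submission
  imports Defs
begin

lemma abs_prod_le_sq: "\<bar>(a::real) * b\<bar> \<le> a\<^sup>2 + b\<^sup>2"
proof -
  have "0 \<le> (\<bar>a\<bar> - \<bar>b\<bar>)\<^sup>2" by simp
  then have "2 * (\<bar>a\<bar> * \<bar>b\<bar>) \<le> a\<^sup>2 + b\<^sup>2"
    by (simp add: power2_eq_square algebra_simps abs_mult_self_eq)
  moreover have "0 \<le> \<bar>a\<bar> * \<bar>b\<bar>" by simp
  ultimately show ?thesis unfolding abs_mult by linarith
qed

lemma helper: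
  fixes M :: "'a measure" and N :: "'z measure" and X :: "'a \<Rightarrow> 'z"
    and Y :: "'a \<Rightarrow> real" and f h :: "'z \<Rightarrow> real"
  assumes P: "prob_space M"
    and Y_meas: "Y \<in> borel_measurable M"
    and X_meas: "X \<in> measurable M N"
    and Y_sq: "integrable M (\<lambda>x. (Y x)\<^sup>2)"
    and f_meas: "f \<in> borel_measurable N"
    and f_sq: "integrable M (\<lambda>x. (f (X x))\<^sup>2)"
    and h_meas: "h \<in> borel_measurable N"
    and h_def: "AE x in M. h (X x) = real_cond_exp M (vimage_algebra (space M) X N) Y x"
  shows "integrable M (\<lambda>x. (h (X x))\<^sup>2)"
    and "(\<integral>x. f (X x) * h (X x) \<partial>M) = (\<integral>x. f (X x) * Y x \<partial>M)"
proof -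
  interpret prob_space M by (rule P)
  define F where "F = vimage_algebra (space M) X N"
  have Xf: "X \<in> space M \<rightarrow> space N" using X_meas by (auto simp: measurable_def)
  have sub: "subalgebra M F"
    unfolding subalgebra_def F_def
  proof
    show "space (vimage_algebra (space M) X N) = space M" by simp
    show "sets (vimage_algebra (space M) X N) \<subseteq> sets M"
      using X_meas by (auto simp: sets_vimage_algebra2[OF Xf] measurable_sets)
  qed
  interpret finite_measure_subalgebra M F
    by unfold_locales (rule sub)
  have XF: "X \<in> measurable F N" unfolding F_def by (rule measurable_vimage_algebra1[OF Xf])
  have fF: "(\<lambda>x. f (X x)) \<in> borel_measurable F" using XF f_meas by measurable
  have fM: "(\<lambda>x. f (X x)) \<in> borel_measurable M" using X_meas f_meas by measurable
  have hM: "(\<lambda>x. h (X x)) \<in> borel_measurable M" using X_meas h_meas by measurable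
  have Yi: "integrable M Y"
    by (rule square_integrable_imp_integrable[OF Y_meas Y_sq])
  have "integrable M (\<lambda>x. (real_cond_exp M F Y x)\<^sup>2)"
    by (rule integrable_convex_cond_exp[where I=UNIV])
       (auto simp: Yi Y_sq convex_power2)
  then show "integrable M (\<lambda>x. (h (X x))\<^sup>2)"
    apply (rule integrable_cong_AE_imp)
    using hM apply measurable
    using h_def unfolding F_def by auto
  have fY: "integrable M (\<lambda>x. f (X x) * Y x)"
  proof (rule Bochner_Integration.integrable_bound[OF Bochner_Integration.integrable_add[OF f_sq Y_sq]])
    show "(\<lambda>x. f (X x) * Y x) \<in> borel_measurable M" using fM Y_meas by measurable
    show "AE x in M. norm (f (X x) * Y x) \<le> norm ((f (X x))\<^sup>2 + (Y x)\<^sup>2)"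
    proof (rule AE_I2)
      fix x
      have "\<bar>f (X x) * Y x\<bar> \<le> (f (X x))\<^sup>2 + (Y x)\<^sup>2"
        by (rule abs_prod_le_sq)
      then show "norm (f (X x) * Y x) \<le> norm ((f (X x))\<^sup>2 + (Y x)\<^sup>2)" by simp
    qed
  qed
  have "(\<integral>x. f (X x) * real_cond_exp M F Y x \<partial>M) = (\<integral>x. f (X x) * Y x \<partial>M)"
    by (rule real_cond_exp_intg(2)[OF fY fF Y_meas])
  moreover have "(\<integral>x. f (X x) * h (X x) \<partial>M) = (\<integral>x. f (X x) * real_cond_exp M F Y x \<partial>M)"
  proof (rule integral_cong_AE)
    have cM: "real_cond_exp M F Y \<in> borel_measurable M" by simp
    show "(\<lambda>x. f (X x) * h (X x)) \<in> borel_measurable M"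
      using fM hM by (rule borel_measurable_times)
    show "(\<lambda>x. f (X x) * real_cond_exp M F Y x) \<in> borel_measurable M"
      using fM cM by (rule borel_measurable_times)
    show "AE x in M. f (X x) * h (X x) = f (X x) * real_cond_exp M F Y x"
      using h_def unfolding F_def by auto
  qed
  ultimately show "(\<integral>x. f (X x) * h (X x) \<partial>M) = (\<integral>x. f (X x) * Y x \<partial>M)" by simp
qed

theorem lemma1:
  fixes M :: "'a measure" and N :: "'z measure"
    and Y :: "'a \<Rightarrow> real" and Z :: "'a \<Rightarrow> 'z"
    and m :: "real \<times> 'z \<Rightarrow> ('z \<Rightarrow> real) \<Rightarrow> real"
    and g0 :: "'z \<Rightarrow> real" and alpha0 :: "'z \<Rightarrow> real" and h0 :: "real \<Rightarrow> real"
  assumes "prob_space M"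
    and Y_meas: "Y \<in> borel_measurable M"
    and Z_meas: "Z \<in> measurable M N"
    and Y_sq: "integrable M (\<lambda>x. (Y x)\<^sup>2)"
    and g0_meas: "g0 \<in> borel_measurable N"
    and g0_def: "AE x in M. g0 (Z x) = real_cond_exp M (vimage_algebra (space M) Z N) Y x"
    and alpha0_meas: "alpha0 \<in> borel_measurable N"
    and alpha0_sq: "integrable M (\<lambda>x. (alpha0 (Z x))\<^sup>2)"
    and riesz: "\<And>g. g \<in> borel_measurable N \<Longrightarrow> integrable M (\<lambda>x. (g (Z x))\<^sup>2) \<Longrightarrow>
                   integrable M (\<lambda>x. m (Y x, Z x) g) \<and>
                   (\<integral>x. m (Y x, Z x) g \<partial>M) = (\<integral>x. alpha0 (Z x) * g (Z x) \<partial>M)"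
    and h0_meas: "h0 \<in> borel_measurable borel"
    and h0_def: "AE x in M. h0 (alpha0 (Z x)) =
                   real_cond_exp M (vimage_algebra (space M) (\<lambda>x. alpha0 (Z x)) borel) Y x"
  shows "(\<integral>x. m (Y x, Z x) g0 \<partial>M) = (\<integral>x. m (Y x, Z x) (h0 \<circ> alpha0) \<partial>M)
       \<and> (\<integral>x. m (Y x, Z x) (h0 \<circ> alpha0) \<partial>M) = (\<integral>x. h0 (alpha0 (Z x)) * alpha0 (Z x) \<partial>M)"
proof -
  have aZ: "(\<lambda>x. alpha0 (Z x)) \<in> measurable M borel"
    using Z_meas alpha0_meas by measurable
  have A: "integrable M (\<lambda>x. (g0 (Z x))\<^sup>2)"
    "(\<integral>x. alpha0 (Z x) * g0 (Z x) \<partial>M) = (\<integral>x. alpha0 (Z x) * Y x \<partial>M)"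
    using helper[OF assms(1) Y_meas Z_meas Y_sq alpha0_meas alpha0_sq g0_meas g0_def] by auto
  have B: "integrable M (\<lambda>x. (h0 (alpha0 (Z x)))\<^sup>2)"
    "(\<integral>x. alpha0 (Z x) * h0 (alpha0 (Z x)) \<partial>M) = (\<integral>x. alpha0 (Z x) * Y x \<partial>M)"
    using helper[OF assms(1) Y_meas aZ Y_sq, of "\<lambda>t. t" h0] alpha0_sq h0_meas h0_def by auto
  have R1: "(\<integral>x. m (Y x, Z x) g0 \<partial>M) = (\<integral>x. alpha0 (Z x) * g0 (Z x) \<partial>M)"
    using riesz[OF g0_meas A(1)] by simp
  have hm: "h0 \<circ> alpha0 \<in> borel_measurable N"
    using alpha0_meas h0_meas by (rule measurable_comp)
  have R2: "(\<integral>x. m (Y x, Z x) (h0 \<circ> alpha0) \<partial>M) = (\<integral>x. alpha0 (Z x) * h0 (alpha0 (Z x)) \<partial>M)"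
    using riesz[OF hm] B(1) by simp
  show ?thesis
    using R1 R2 A(2) B(2) by (simp add: mult.commute)
qed

end
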